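(* Let $n\ge2$ and $p^*=\binom{n}{\lfloor n/3\rfloor}\left(2^{\,n-\lfloor n/3\rfloor-1}-1\right)$. There is a set $\Sigma$ of $n\times n$ stochastic matrices such that: (i) there is a product $P$ of $p^*$ matrices from $\Sigma$ whose powers $P^k$ do not converge (as $k\to\infty$) to a rank one matrix; and (ii) for every product $P$ of at most $p^*-1$ matrices from $\Sigma$, the sequence of powers $P^k$ converges as $k\to\infty$ to a rank one matrix.
   Context: A matrix is stochastic if it is nonnegative and each row sums to one. *)

theory Defs
  imports "HOL-Analysis.Analysis"
begin

definition stochastic :: "real^'n^'n \<Rightarrow> bool" where
  "stochastic A \<longleftrightarrow> (\<forall>i j. 0 \<le> A $ i $ j) \<and> (\<forall>i. (\<Sum>j\<in>UNIV. A $ i $ j) = 1)"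

definition mat_prod_list :: "(real^'n^'n) list \<Rightarrow> real^'n^'n" where
  "mat_prod_list ms = foldr (\<lambda>A B. A ** B) ms (mat 1)"

definition mat_pow :: "real^'n^'n \<Rightarrow> nat \<Rightarrow> real^'n^'n" where
  "mat_pow P k = (((**) P) ^^ k) (mat 1)"

definition pow_conv_rank_one :: "real^'n^'n \<Rightarrow> bool" where
  "pow_conv_rank_one P \<longleftrightarrow> (\<exists>L. (\<lambda>k. mat_pow P k) \<longlonglongrightarrow> L \<and> rank L = 1)"

end

theory Submission
  imports Defs
begin

lemma stoch_nonneg: "stochastic A \<Longrightarrow> 0 \<le> A $ i $ j"
  by (simp add: stochastic_def)
lemma stoch_rowsum: "stochastic A \<Longrightarrow> (\<Sum>j\<in>UNIV. A $ i $ j) = 1"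
  by (simp add: stochastic_def)

lemma stoch_mult: assumes "stochastic A" "stochastic B" shows "stochastic (A ** B)"
proof -
  have nn: "0 \<le> (A ** B) $ i $ j" for i j
    using assms by (auto simp: matrix_matrix_mult_def stochastic_def intro!: sum_nonneg)
  have "(\<Sum>j\<in>UNIV. (A ** B) $ i $ j) = 1" for i
  proof -
    have "(\<Sum>j\<in>UNIV. (A ** B) $ i $ j) = (\<Sum>j\<in>UNIV. \<Sum>l\<in>UNIV. A$i$l * B$l$j)"
      by (simp add: matrix_matrix_mult_def)
    also have "\<dots> = (\<Sum>l\<in>UNIV. A$i$l * (\<Sum>j\<in>UNIV. B$l$j))"
      by (subst sum.swap) (simp add: sum_distrib_left)
    also have "\<dots> = 1" using assms by (simp add: stochastic_def)
    finally show ?thesis .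
  qed
  then show ?thesis using nn by (simp add: stochastic_def)
qed

lemma stoch_id: "stochastic (mat 1 :: real^'n^'n)"
proof -
  have "(\<Sum>j\<in>UNIV. (mat 1 :: real^'n^'n) $ i $ j) = 1" for i
    by (simp add: mat_def sum.delta)
  then show ?thesis by (simp add: stochastic_def mat_def)
qed

lemma mat_prod_list_Cons: "mat_prod_list (A # ms) = A ** mat_prod_list ms"
  by (simp add: mat_prod_list_def)
lemma mat_prod_list_Nil: "mat_prod_list [] = mat 1"
  by (simp add: mat_prod_list_def)
lemma mat_prod_list_append: "mat_prod_list (xs @ ys) = mat_prod_list xs ** mat_prod_list ys"
  by (induction xs) (auto simp: mat_prod_list_Cons mat_prod_list_Nil matrix_mul_assoc)

lemma stoch_prod_list: "(\<forall>A\<in>set ms. stochastic A) \<Longrightarrow> stochastic (mat_prod_list ms)"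
  by (induction ms) (auto simp: mat_prod_list_Cons mat_prod_list_Nil stoch_id stoch_mult)

lemma mat_pow_0: "mat_pow P 0 = mat 1" by (simp add: mat_pow_def)
lemma mat_pow_Suc: "mat_pow P (Suc k) = P ** mat_pow P k" by (simp add: mat_pow_def)
lemma mat_pow_add: "mat_pow P (a + b) = mat_pow P a ** mat_pow P b"
  by (induction a) (auto simp: mat_pow_0 mat_pow_Suc matrix_mul_assoc)
lemma stoch_pow: "stochastic P \<Longrightarrow> stochastic (mat_pow P k)"
  by (induction k) (auto simp: mat_pow_0 mat_pow_Suc stoch_id stoch_mult)
lemma mat_pow_two: "mat_pow (mat_prod_list ms) 2 = mat_prod_list (ms @ ms)"
  by (simp add: numeral_2_eq_2 mat_pow_Suc mat_pow_0 mat_prod_list_append)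

definition supp :: "real^'n^'n \<Rightarrow> 'n set \<Rightarrow> 'n set" where
  "supp A S = {j. \<exists>i\<in>S. A $ i $ j > 0}"

fun suppL :: "(real^'n^'n) list \<Rightarrow> 'n set \<Rightarrow> 'n set" where
  "suppL [] S = S"
| "suppL (A # ms) S = suppL ms (supp A S)"

lemma pos_mult_iff:
  fixes A B :: "real^'n^'n"
  assumes "\<And>i j. 0 \<le> A $ i $ j" "\<And>i j. 0 \<le> B $ i $ j"
  shows "(A ** B) $ i $ j > 0 \<longleftrightarrow> (\<exists>l. A $ i $ l > 0 \<and> B $ l $ j > 0)"
proof -
  have nn: "0 \<le> A $ i $ l * B $ l $ j" for l using assms(1)[of i l] assms(2)[of l j] by simp
  have "(A ** B) $ i $ j = (\<Sum>l\<in>UNIV. A $ i $ l * B $ l $ j)"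
    by (simp add: matrix_matrix_mult_def)
  moreover have "(\<Sum>l\<in>UNIV. A $ i $ l * B $ l $ j) > 0 \<longleftrightarrow> (\<exists>l. A $ i $ l * B $ l $ j > 0)"
  proof
    assume "(\<Sum>l\<in>UNIV. A $ i $ l * B $ l $ j) > 0"
    then have "(\<Sum>l\<in>UNIV. A $ i $ l * B $ l $ j) \<noteq> 0" by simp
    then obtain l where "A $ i $ l * B $ l $ j \<noteq> 0"
      by (meson sum.neutral)
    then have "A $ i $ l * B $ l $ j > 0" using nn[of l] by linarith
    then show "\<exists>l. A $ i $ l * B $ l $ j > 0" by blast
  next
    assume "\<exists>l. A $ i $ l * B $ l $ j > 0"
    then obtain l where "A $ i $ l * B $ l $ j > 0" by blast
    then show "(\<Sum>l\<in>UNIV. A $ i $ l * B $ l $ j) > 0"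
      using nn by (intro sum_pos2[of UNIV l]) auto
  qed
  moreover have "A $ i $ l * B $ l $ j > 0 \<longleftrightarrow> A $ i $ l > 0 \<and> B $ l $ j > 0" for l
    using assms[of i l] assms(2)[of l j] by (auto simp: zero_less_mult_iff)
  ultimately show ?thesis by simp
qed

lemma supp_mult:
  fixes A B :: "real^'n^'n"
  assumes "\<And>i j. 0 \<le> A $ i $ j" "\<And>i j. 0 \<le> B $ i $ j"
  shows "supp (A ** B) S = supp B (supp A S)"
  using pos_mult_iff[OF assms] by (auto simp: supp_def)

lemma supp_id: "supp (mat 1) S = S"
  by (auto simp: supp_def mat_def)

lemma supp_prod_list: "(\<forall>A\<in>set ms. stochastic A) \<Longrightarrow> supp (mat_prod_list ms) S = suppL ms S"
proof (induction ms arbitrary: S)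
  case Nil then show ?case by (simp add: mat_prod_list_Nil supp_id)
next
  case (Cons A ms)
  have "stochastic (mat_prod_list ms)" using Cons.prems stoch_prod_list by auto
  then show ?case using Cons
    by (simp add: mat_prod_list_Cons supp_mult stoch_nonneg)
qed

lemma supp_mono: "S \<subseteq> T \<Longrightarrow> supp A S \<subseteq> supp A T"
  by (auto simp: supp_def)
lemma suppL_mono: "S \<subseteq> T \<Longrightarrow> suppL ms S \<subseteq> suppL ms T"
  by (induction ms arbitrary: S T) (auto dest: supp_mono[where A=A for A])

lemma supp_ne: assumes "stochastic A" "S \<noteq> {}" shows "supp A S \<noteq> {}"
proof -
  obtain i where i: "i \<in> S" using assms by auto
  have "\<exists>j. A $ i $ j > 0"
  proof (rule ccontr)
    assume "\<not> ?thesis"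
    then have "\<forall>j. A $ i $ j = 0" using stoch_nonneg[OF assms(1), of i] by (smt (verit))
    then show False using stoch_rowsum[OF assms(1), of i] by simp
  qed
  then show ?thesis using i by (auto simp: supp_def)
qed

lemma suppL_ne: "(\<forall>A\<in>set ms. stochastic A) \<Longrightarrow> S \<noteq> {} \<Longrightarrow> suppL ms S \<noteq> {}"
  by (induction ms arbitrary: S) (auto simp: supp_ne)

lemma suppL_append: "suppL (xs @ ys) S = suppL ys (suppL xs S)"
  by (induction xs arbitrary: S) auto

lemma suppL_meet:
  assumes "\<forall>A\<in>set ms. stochastic A" "U \<inter> V \<noteq> {}"
  shows "suppL ms U \<inter> suppL ms V \<noteq> {}"
proof -
  obtain z where "z \<in> U" "z \<in> V" using assms by auto
  then have "suppL ms {z} \<subseteq> suppL ms U" "suppL ms {z} \<subseteq> suppL ms V"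
    using suppL_mono[of "{z}" U ms] suppL_mono[of "{z}" V ms] by auto
  moreover have "suppL ms {z} \<noteq> {}" using suppL_ne assms by auto
  ultimately show ?thesis by blast
qed



lemma avg_bounds:
  fixes W :: "real^'n^'n"
  assumes "stochastic W" "\<And>l. lo \<le> v l" "\<And>l. v l \<le> hi"
  shows "lo \<le> (\<Sum>l\<in>UNIV. W$x$l * v l)" "(\<Sum>l\<in>UNIV. W$x$l * v l) \<le> hi"
proof -
  have "(\<Sum>l\<in>UNIV. W$x$l * lo) \<le> (\<Sum>l\<in>UNIV. W$x$l * v l)"
    using assms by (intro sum_mono mult_left_mono) (auto simp: stoch_nonneg)
  then show "lo \<le> (\<Sum>l\<in>UNIV. W$x$l * v l)"
    using stoch_rowsum[OF assms(1), of x] by (simp add: sum_distrib_right[symmetric])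
  have "(\<Sum>l\<in>UNIV. W$x$l * v l) \<le> (\<Sum>l\<in>UNIV. W$x$l * hi)"
    using assms by (intro sum_mono mult_left_mono) (auto simp: stoch_nonneg)
  then show "(\<Sum>l\<in>UNIV. W$x$l * v l) \<le> hi"
    using stoch_rowsum[OF assms(1), of x] by (simp add: sum_distrib_right[symmetric])
qed

lemma contraction:
  fixes W :: "real^'n^'n"
  assumes "stochastic W" "\<And>l. lo \<le> v l" "\<And>l. v l \<le> hi"
    and g: "\<gamma> \<le> (\<Sum>l\<in>UNIV. min (W$x$l) (W$y$l))"
  shows "(\<Sum>l\<in>UNIV. W$x$l * v l) - (\<Sum>l\<in>UNIV. W$y$l * v l) \<le> (1 - \<gamma>) * (hi - lo)"
proof -
  define m where "m l = min (W$x$l) (W$y$l)" for l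
  define c where "c = (\<Sum>l\<in>UNIV. m l)"
  have lohi: "lo \<le> hi" using assms(2,3)[of undefined] by linarith
  have ex: "(\<Sum>l\<in>UNIV. (W$x$l - m l)) = 1 - c"
    using stoch_rowsum[OF assms(1), of x] by (simp add: c_def sum_subtractf)
  have ey: "(\<Sum>l\<in>UNIV. (W$y$l - m l)) = 1 - c"
    using stoch_rowsum[OF assms(1), of y] by (simp add: c_def sum_subtractf)
  have "(\<Sum>l\<in>UNIV. W$x$l * v l) - (\<Sum>l\<in>UNIV. W$y$l * v l)
      = (\<Sum>l\<in>UNIV. (W$x$l - m l) * v l) - (\<Sum>l\<in>UNIV. (W$y$l - m l) * v l)"
    by (simp add: algebra_simps sum_subtractf)
  also have "(\<Sum>l\<in>UNIV. (W$x$l - m l) * v l) \<le> (\<Sum>l\<in>UNIV. (W$x$l - m l) * hi)"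
    using assms by (intro sum_mono mult_left_mono) (auto simp: m_def)
  also have "(\<Sum>l\<in>UNIV. (W$y$l - m l) * lo) \<le> (\<Sum>l\<in>UNIV. (W$y$l - m l) * v l)"
    using assms by (intro sum_mono mult_left_mono) (auto simp: m_def)
  then have "(\<Sum>l\<in>UNIV. (W$x$l - m l) * hi) - (\<Sum>l\<in>UNIV. (W$y$l - m l) * v l)
     \<le> (\<Sum>l\<in>UNIV. (W$x$l - m l) * hi) - (\<Sum>l\<in>UNIV. (W$y$l - m l) * lo)" by linarith
  also have "\<dots> = (1 - c) * (hi - lo)"
  proof -
    have "(\<Sum>l\<in>UNIV. (W$x$l - m l) * hi) = (1 - c) * hi"
      by (simp only: sum_distrib_right[symmetric] ex)
    moreover have "(\<Sum>l\<in>UNIV. (W$y$l - m l) * lo) = (1 - c) * lo"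
      by (simp only: sum_distrib_right[symmetric] ey)
    ultimately show ?thesis by (simp add: algebra_simps)
  qed
  also have "\<dots> \<le> (1 - \<gamma>) * (hi - lo)"
    using g lohi by (intro mult_right_mono) (auto simp: c_def m_def)
  finally show ?thesis by simp
qed

lemma mat_pow_entry_add:
  "mat_pow P (m + k) $ x $ j = (\<Sum>l\<in>UNIV. mat_pow P m $ x $ l * mat_pow P k $ l $ j)"
  by (simp add: mat_pow_add matrix_matrix_mult_def)

lemma stoch_le1: "stochastic A \<Longrightarrow> A $ i $ j \<le> 1"
proof -
  assume a: "stochastic A"
  have "A $ i $ j \<le> (\<Sum>j\<in>UNIV. A $ i $ j)"
    by (rule member_le_sum) (auto simp: stoch_nonneg[OF a])
  then show ?thesis using stoch_rowsum[OF a] by simp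
qed

lemma column_converges:
  fixes Q :: "real^'n^'n"
  assumes Q: "stochastic Q" and N: "N > 0" and g0: "0 < \<gamma>"
    and g: "\<And>x y. \<gamma> \<le> (\<Sum>l\<in>UNIV. min (mat_pow Q N$x$l) (mat_pow Q N$y$l))"
  shows "\<exists>c. \<forall>x. (\<lambda>k. mat_pow Q k $ x $ j) \<longlonglongrightarrow> c"
proof -
  define u where "u k x = mat_pow Q k $ x $ j" for k x
  define hi where "hi k = Max (range (u k))" for k
  define lo where "lo k = Min (range (u k))" for k
  have fin: "finite (range (u k))" for k by simp
  have hi_ge: "u k x \<le> hi k" for k x unfolding hi_def by (rule Max_ge) auto
  have lo_le: "lo k \<le> u k x" for k x unfolding lo_def by (rule Min_le) auto
  have "\<forall>k. \<exists>x. hi k = u k x"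
  proof
    fix k
    have "hi k \<in> range (u k)" unfolding hi_def by (rule Max_in) auto
    then show "\<exists>x. hi k = u k x" by auto
  qed
  from choice[OF this] obtain xh where xh: "hi k = u k (xh k)" for k by blast
  have "\<forall>k. \<exists>x. lo k = u k x"
  proof
    fix k
    have "lo k \<in> range (u k)" unfolding lo_def by (rule Min_in) auto
    then show "\<exists>x. lo k = u k x" by auto
  qed
  from choice[OF this] obtain xl where xl: "lo k = u k (xl k)" for k by blast
  have step: "u (m + k) x = (\<Sum>l\<in>UNIV. mat_pow Q m $ x $ l * u k l)" for m k x
    unfolding u_def by (rule mat_pow_entry_add)
  have P1: "lo k \<le> u (m + k) x \<and> u (m + k) x \<le> hi k" for m k x
  proof -
    have "lo k \<le> (\<Sum>l\<in>UNIV. mat_pow Q m $ x $ l * u k l)"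
      by (rule avg_bounds(1)[OF stoch_pow[OF Q, of m], of "lo k" "u k" "hi k" x]) (auto simp: lo_le hi_ge)
    moreover have "(\<Sum>l\<in>UNIV. mat_pow Q m $ x $ l * u k l) \<le> hi k"
      by (rule avg_bounds(2)[OF stoch_pow[OF Q, of m], of "lo k" "u k" "hi k" x]) (auto simp: lo_le hi_ge)
    ultimately show ?thesis by (simp only: step)
  qed
  have hidec: "decseq hi"
  proof (rule decseq_SucI)
    fix k show "hi (Suc k) \<le> hi k" using xh[of "Suc k"] P1[of k 1] by simp
  qed
  have loinc: "incseq lo"
  proof (rule incseq_SucI)
    fix k show "lo k \<le> lo (Suc k)" using xl[of "Suc k"] P1[of k 1] by simp
  qed
  have lo0: "0 \<le> lo k" for k using xl[of k] stoch_nonneg[OF stoch_pow[OF Q]] by (simp add: u_def)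
  have hi1: "hi k \<le> 1" for k using xh[of k] stoch_le1[OF stoch_pow[OF Q]] by (simp add: u_def)
  have P3: "hi (N + k) - lo (N + k) \<le> (1 - \<gamma>) * (hi k - lo k)" for k
    using contraction[OF stoch_pow[OF Q, of N], of "lo k" "u k" "hi k" \<gamma> "xh (N+k)" "xl (N+k)", OF lo_le hi_ge g]
      xh[of "N+k"] xl[of "N+k"] step by simp
  have g1: "\<gamma> \<le> 1"
  proof -
    have "(\<Sum>l\<in>UNIV. min (mat_pow Q N$x$l) (mat_pow Q N$x$l)) = 1" for x
      using stoch_rowsum[OF stoch_pow[OF Q]] by simp
    then show ?thesis using g[of undefined undefined] by simp
  qed
  have P4: "hi (q * N) - lo (q * N) \<le> (1 - \<gamma>) ^ q" for q
  proof (induction q)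
    case 0 then show ?case using hi1[of 0] lo0[of 0] by simp
  next
    case (Suc q)
    have "hi (Suc q * N) - lo (Suc q * N) \<le> (1 - \<gamma>) * (hi (q*N) - lo (q*N))"
      using P3[of "q * N"] by (simp add: add.commute)
    also have "\<dots> \<le> (1 - \<gamma>) * (1 - \<gamma>) ^ q"
      using Suc g1 by (intro mult_left_mono) auto
    finally show ?case by simp
  qed
  have hi0: "\<forall>i. 0 \<le> hi i"
  proof
    fix i show "0 \<le> hi i" using lo0[of i] lo_le[of i "xh i"] xh[of i] by linarith
  qed
  have lo1: "\<forall>i. lo i \<le> 1"
  proof
    fix i show "lo i \<le> 1" using hi1[of i] hi_ge[of i "xl i"] xl[of i] by linarith
  qed
  obtain h where h: "hi \<longlonglongrightarrow> h"
    using decseq_convergent[OF hidec hi0] by blast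
  obtain l0 where l0: "lo \<longlonglongrightarrow> l0"
    using incseq_convergent[OF loinc lo1] by blast
  have osc0: "(\<lambda>k. hi k - lo k) \<longlonglongrightarrow> 0"
  proof (rule LIMSEQ_I)
    fix r :: real assume r: "0 < r"
    obtain q where q: "(1 - \<gamma>) ^ q < r" using real_arch_pow_inv[OF r, of "1 - \<gamma>"] g0 by auto
    show "\<exists>no. \<forall>k\<ge>no. norm (hi k - lo k - 0) < r"
    proof (intro exI allI impI)
      fix k assume k: "q * N \<le> k"
      have "hi k \<le> hi (q*N)" using hidec k by (simp add: decseq_def)
      moreover have "lo (q*N) \<le> lo k" using loinc k by (simp add: incseq_def)
      moreover have "lo k \<le> hi k" using lo_le[of k undefined] hi_ge[of k undefined] by linarith
      ultimately show "norm (hi k - lo k - 0) < r" using P4[of q] q by simp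
    qed
  qed
  have "h = l0"
  proof -
    have "(\<lambda>k. hi k - lo k) \<longlonglongrightarrow> h - l0" using h l0 by (intro tendsto_diff)
    from LIMSEQ_unique[OF this osc0] show ?thesis by simp
  qed
  have "(\<lambda>k. u k x) \<longlonglongrightarrow> h" for x
  proof (rule tendsto_sandwich[of lo "\<lambda>k. u k x" sequentially hi])
    show "\<forall>\<^sub>F k in sequentially. lo k \<le> u k x" using lo_le by simp
    show "\<forall>\<^sub>F k in sequentially. u k x \<le> hi k" using hi_ge by simp
    show "lo \<longlonglongrightarrow> h" using l0 \<open>h = l0\<close> by simp
    show "hi \<longlonglongrightarrow> h" using h .
  qed
  then show ?thesis unfolding u_def by blast
qed

lemma rank_one_of_rows:
  fixes c :: "'n::finite \<Rightarrow> real"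
  assumes "(\<Sum>j\<in>UNIV. c j) = 1"
  shows "rank ((\<chi> x j. c j) :: real^'n^'n) = 1"
proof -
  have "rows ((\<chi> x j. c j) :: real^'n^'n) = {(\<chi> j. c j)}"
    by (auto simp: rows_def row_def)
  moreover have "(\<chi> j. c j) \<noteq> (0 :: real^'n)"
  proof
    assume "(\<chi> j. c j) = (0 :: real^'n)"
    then have "(\<chi> j. c j) $ j = (0 :: real^'n) $ j" for j by simp
    then have "c j = 0" for j by simp
    then show False using assms by simp
  qed
  ultimately show ?thesis by (simp add: row_rank_def)
qed

lemma conv_of_scrambling:
  fixes Q :: "real^'n^'n"
  assumes Q: "stochastic Q" and N: "N > 0"
    and scr: "\<And>x y. \<exists>j. mat_pow Q N $ x $ j > 0 \<and> mat_pow Q N $ y $ j > 0"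
  shows "pow_conv_rank_one Q"
proof -
  define W where "W = mat_pow Q N"
  define cc where "cc = (\<lambda>(x,y). (\<Sum>l\<in>UNIV. min (W$x$l) (W$y$l)))"
  have ccpos: "cc (x,y) > 0" for x y
  proof -
    obtain j where j: "W $ x $ j > 0" "W $ y $ j > 0" using scr unfolding W_def by blast
    show ?thesis unfolding cc_def using j stoch_nonneg[OF stoch_pow[OF Q, of N]]
      by (auto intro!: sum_pos2[of UNIV j] simp: W_def)
  qed
  define \<gamma> where "\<gamma> = Min (range cc)"
  have g0: "0 < \<gamma>" unfolding \<gamma>_def using ccpos
    by (subst Min_gr_iff) auto
  have g: "\<gamma> \<le> (\<Sum>l\<in>UNIV. min (mat_pow Q N$x$l) (mat_pow Q N$y$l))" for x y
  proof -
    have "\<gamma> \<le> cc (x,y)" unfolding \<gamma>_def by (rule Min_le) auto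
    then show ?thesis by (simp add: cc_def W_def)
  qed
  have "\<forall>j. \<exists>c. \<forall>x. (\<lambda>k. mat_pow Q k $ x $ j) \<longlonglongrightarrow> c"
    using column_converges[OF Q N g0 g] by blast
  then obtain c where c: "\<And>j x. (\<lambda>k. mat_pow Q k $ x $ j) \<longlonglongrightarrow> c j" by metis
  define L :: "real^'n^'n" where "L = (\<chi> x j. c j)"
  have conv: "(\<lambda>k. mat_pow Q k) \<longlonglongrightarrow> L"
    unfolding L_def by (intro vec_tendstoI) (simp add: c vec_tendstoI)
  have "(\<lambda>k. \<Sum>j\<in>UNIV. mat_pow Q k $ x $ j) \<longlonglongrightarrow> (\<Sum>j\<in>UNIV. c j)" for x
    by (intro tendsto_sum c)
  moreover have "(\<lambda>k. \<Sum>j\<in>UNIV. mat_pow Q k $ x $ j) = (\<lambda>k. 1)" for x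
    using stoch_rowsum[OF stoch_pow[OF Q]] by simp
  ultimately have "(\<lambda>k. 1::real) \<longlonglongrightarrow> (\<Sum>j\<in>UNIV. c j)" for x by simp
  then have "(\<Sum>j\<in>UNIV. c j) = 1" by (simp add: LIMSEQ_const_iff)
  then have "rank L = 1" unfolding L_def by (rule rank_one_of_rows)
  then show ?thesis using conv unfolding pow_conv_rank_one_def by blast
qed



lemma closed_pow:
  fixes Q :: "real^'n^'n"
  assumes Q: "stochastic Q" and cl: "\<And>x j. x \<in> B \<Longrightarrow> Q$x$j > 0 \<Longrightarrow> j \<in> B"
  shows "x \<in> B \<Longrightarrow> j \<notin> B \<Longrightarrow> mat_pow Q k $ x $ j = 0"
proof (induction k arbitrary: x)
  case 0 then show ?case by (auto simp: mat_pow_0 mat_def)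
next
  case (Suc k)
  have z: "Q$x$l * mat_pow Q k $ l $ j = 0" for l
  proof (cases "Q$x$l > 0")
    case True then show ?thesis using cl Suc by auto
  next
    case False then have "Q$x$l = 0" using stoch_nonneg[OF Q, of x l] by linarith
    then show ?thesis by simp
  qed
  have "mat_pow Q (Suc k) $ x $ j = (\<Sum>l\<in>UNIV. Q$x$l * mat_pow Q k $ l $ j)"
    by (simp add: mat_pow_Suc matrix_matrix_mult_def)
  also have "\<dots> = 0" using z by (intro sum.neutral) blast
  finally show ?case .
qed

lemma not_conv:
  fixes Q :: "real^'n^'n"
  assumes Q: "stochastic Q" and b: "b \<in> B" and c: "c \<in> C" and disj: "B \<inter> C = {}"
    and clB: "\<And>x j. x \<in> B \<Longrightarrow> Q$x$j > 0 \<Longrightarrow> j \<in> B"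
    and clC: "\<And>x j. x \<in> C \<Longrightarrow> Q$x$j > 0 \<Longrightarrow> j \<in> C"
  shows "\<not> pow_conv_rank_one Q"
proof
  assume "pow_conv_rank_one Q"
  then obtain L where L: "(\<lambda>k. mat_pow Q k) \<longlonglongrightarrow> L" and r: "rank L = 1"
    unfolding pow_conv_rank_one_def by blast
  have Le: "(\<lambda>k. mat_pow Q k $ x $ j) \<longlonglongrightarrow> L $ x $ j" for x j
    by (intro tendsto_vec_nth L)
  have sum1: "(\<Sum>j\<in>UNIV. L $ x $ j) = 1" for x
  proof -
    have "(\<lambda>k. \<Sum>j\<in>UNIV. mat_pow Q k $ x $ j) \<longlonglongrightarrow> (\<Sum>j\<in>UNIV. L $ x $ j)"
      by (intro tendsto_sum Le)
    moreover have "(\<lambda>k. \<Sum>j\<in>UNIV. mat_pow Q k $ x $ j) = (\<lambda>k. 1)"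
      using stoch_rowsum[OF stoch_pow[OF Q]] by simp
    ultimately have "(\<lambda>k. 1::real) \<longlonglongrightarrow> (\<Sum>j\<in>UNIV. L $ x $ j)" by simp
    then show ?thesis by (simp add: LIMSEQ_const_iff)
  qed
  have zero: "L $ x $ j = 0" if "x \<in> D" "j \<notin> D" "\<And>x j. x \<in> D \<Longrightarrow> Q$x$j > 0 \<Longrightarrow> j \<in> D" for x j D
  proof -
    have "(\<lambda>k. mat_pow Q k $ x $ j) = (\<lambda>k. 0)"
      using closed_pow[OF Q, of D x j] that by auto
    then have "(\<lambda>k. 0::real) \<longlonglongrightarrow> L $ x $ j" using Le[of x j] by simp
    then show ?thesis by (simp add: LIMSEQ_const_iff)
  qed
  have "\<exists>j. L $ b $ j \<noteq> 0"
  proof (rule ccontr)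
    assume "\<not> ?thesis"
    then have "\<forall>j. L $ b $ j = 0" by blast
    then show False using sum1[of b] by simp
  qed
  then obtain jb where jb: "L $ b $ jb \<noteq> 0" by blast
  have jbB: "jb \<in> B" using zero[of b B jb] b clB jb by blast
  have "\<exists>j. L $ c $ j \<noteq> 0"
  proof (rule ccontr)
    assume "\<not> ?thesis"
    then have "\<forall>j. L $ c $ j = 0" by blast
    then show False using sum1[of c] by simp
  qed
  then obtain jc where jc: "L $ c $ jc \<noteq> 0" by blast
  have jcC: "jc \<in> C" using zero[of c C jc] c clC jc by blast
  have Lbjc: "L $ b $ jc = 0" using zero[of b B jc] b clB jcC disj by blast
  have rb0: "row b L \<noteq> 0"
  proof
    assume "row b L = 0"
    then have "row b L $ jb = 0" by simp
    moreover have "row b L $ jb = L $ b $ jb" unfolding row_def by (rule vec_lambda_beta)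
    ultimately show False using jb by simp
  qed
  have nspan: "row c L \<notin> span {row b L}"
  proof
    assume "row c L \<in> span {row b L}"
    then obtain t where "row c L = t *\<^sub>R row b L" by (auto simp: span_singleton)
    then have e: "row c L $ jc = t * (row b L $ jc)" by simp
    have e1: "row c L $ jc = L $ c $ jc" unfolding row_def by (rule vec_lambda_beta)
    have e2: "row b L $ jc = L $ b $ jc" unfolding row_def by (rule vec_lambda_beta)
    show False using e e1 e2 jc Lbjc by simp
  qed
  have ind: "independent {row c L, row b L}"
    by (rule independent_insertI[OF nspan]) (simp add: rb0)
  have ne: "row c L \<noteq> row b L" using nspan span_base[of "row b L" "{row b L}"] by auto
  have "card {row c L, row b L} \<le> dim (rows L)"
    by (rule independent_card_le_dim[OF _ ind]) (auto simp: rows_def)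
  then have "2 \<le> rank L" using ne by (simp add: row_rank_def)
  then show False using r by simp
qed



definition nx :: "nat \<Rightarrow> nat \<Rightarrow> nat" where "nx p i = Suc i mod p"

definition Mcfg :: "nat \<Rightarrow> (nat \<Rightarrow> 'n::finite set) \<Rightarrow> (nat \<Rightarrow> 'n set) \<Rightarrow> nat \<Rightarrow> real^'n^'n" where
  "Mcfg p Bf Cf i = (\<chi> x j. if x \<in> Bf i then (if j \<in> Bf (nx p i) then 1 / real (card (Bf (nx p i))) else 0)
       else if x \<in> Cf i then (if j \<in> Cf (nx p i) then 1 / real (card (Cf (nx p i))) else 0)
       else 1 / real CARD('n))"

definition goodcfg :: "nat \<Rightarrow> (nat \<Rightarrow> 'n::finite set) \<Rightarrow> (nat \<Rightarrow> 'n set) \<Rightarrow> bool" where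
  "goodcfg p Bf Cf \<longleftrightarrow> p > 0 \<and>
     (\<forall>i<p. Bf i \<inter> Cf i = {} \<and> Bf i \<noteq> {} \<and> Cf i \<noteq> {} \<and> card (Bf i \<union> Cf i) = card (Bf 0 \<union> Cf 0)) \<and>
     (\<forall>i<p. \<forall>j<p. {Bf i, Cf i} = {Bf j, Cf j} \<longrightarrow> i = j)"

lemma nx_lt: "p > 0 \<Longrightarrow> nx p i < p" by (simp add: nx_def)

lemma sum_if_const: "(\<Sum>j\<in>UNIV. if j \<in> S then a else 0) = real (card (S :: 'n::finite set)) * a"
  by (simp add: sum.If_cases)

definition ixg :: "nat \<Rightarrow> (nat \<Rightarrow> 'n::finite set) \<Rightarrow> (nat \<Rightarrow> 'n set) \<Rightarrow> real^'n^'n \<Rightarrow> nat" where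
  "ixg p Bf Cf A = (SOME i. i < p \<and> A = Mcfg p Bf Cf i)"

context
  fixes p :: nat and Bf Cf :: "nat \<Rightarrow> 'n::finite set"
  assumes G: "goodcfg p Bf Cf"
begin

lemma p_pos: "p > 0" using G unfolding goodcfg_def by blast
lemma cfg: "i < p \<Longrightarrow> Bf i \<inter> Cf i = {} \<and> Bf i \<noteq> {} \<and> Cf i \<noteq> {} \<and> card (Bf i \<union> Cf i) = card (Bf 0 \<union> Cf 0)"
  using G unfolding goodcfg_def by blast
lemma distinct_cfg: "i < p \<Longrightarrow> j < p \<Longrightarrow> {Bf i, Cf i} = {Bf j, Cf j} \<Longrightarrow> i = j"
  using G unfolding goodcfg_def by blast

abbreviation "M \<equiv> Mcfg p Bf Cf"
abbreviation "nxt \<equiv> nx p"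

lemma stoch_M: assumes i: "i < p" shows "stochastic (M i)"
proof -
  have n: "nxt i < p" using nx_lt p_pos by auto
  have cB: "card (Bf (nxt i)) > 0" and cC: "card (Cf (nxt i)) > 0"
    using cfg[OF n] by (auto simp: card_gt_0_iff)
  have "(\<Sum>j\<in>UNIV. M i $ x $ j) = 1" for x
  proof -
    consider "x \<in> Bf i" | "x \<notin> Bf i" "x \<in> Cf i" | "x \<notin> Bf i" "x \<notin> Cf i" by blast
    then show ?thesis
    proof cases
      case 1 then show ?thesis using cB cfg[OF n] by (simp add: Mcfg_def sum_if_const)
    next
      case 2 then show ?thesis using cC cfg[OF n] by (simp add: Mcfg_def sum_if_const)
    next
      case 3 then show ?thesis by (simp add: Mcfg_def)
    qed
  qed
  moreover have "0 \<le> M i $ x $ j" for x j by (simp add: Mcfg_def)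
  ultimately show ?thesis by (simp add: stochastic_def)
qed

lemma pos_M: assumes i: "i < p"
  shows "M i $ x $ j > 0 \<longleftrightarrow> (x \<in> Bf i \<and> j \<in> Bf (nxt i)) \<or> (x \<in> Cf i \<and> j \<in> Cf (nxt i))
     \<or> (x \<notin> Bf i \<and> x \<notin> Cf i)"
proof -
  have n: "nxt i < p" using nx_lt p_pos by auto
  have cB: "card (Bf (nxt i)) > 0" and cC: "card (Cf (nxt i)) > 0"
    using cfg[OF n] by (auto simp: card_gt_0_iff)
  have d: "x \<in> Cf i \<Longrightarrow> x \<notin> Bf i" using cfg[OF i] by auto
  show ?thesis using cB cC d by (auto simp: Mcfg_def)
qed

lemma supp_M: assumes i: "i < p"
  shows "supp (M i) S = (if S \<inter> Bf i \<noteq> {} then Bf (nxt i) else {}) \<union> (if S \<inter> Cf i \<noteq> {} then Cf (nxt i) else {})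
     \<union> (if S - (Bf i \<union> Cf i) \<noteq> {} then UNIV else {})"
  using pos_M[OF i] by (auto simp: supp_def)

lemma pair_M: assumes i: "i < p" and S: "S \<noteq> {}" and T: "T \<noteq> {}"
    and d: "supp (M i) S \<inter> supp (M i) T = {}"
  shows "(S \<subseteq> Bf i \<and> T \<subseteq> Cf i \<and> supp (M i) S = Bf (nxt i) \<and> supp (M i) T = Cf (nxt i)) \<or>
         (S \<subseteq> Cf i \<and> T \<subseteq> Bf i \<and> supp (M i) S = Cf (nxt i) \<and> supp (M i) T = Bf (nxt i))"
proof -
  have n: "nxt i < p" using nx_lt p_pos by auto
  note c = cfg[OF i] cfg[OF n]
  have sS: "supp (M i) S \<noteq> {}" and sT: "supp (M i) T \<noteq> {}"
    using supp_ne[OF stoch_M[OF i]] S T by auto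
  have S1: "S \<subseteq> Bf i \<union> Cf i"
  proof (rule ccontr)
    assume "\<not> ?thesis"
    then have "supp (M i) S = UNIV" by (auto simp: supp_M[OF i])
    then show False using d sT by auto
  qed
  have T1: "T \<subseteq> Bf i \<union> Cf i"
  proof (rule ccontr)
    assume "\<not> ?thesis"
    then have "supp (M i) T = UNIV" by (auto simp: supp_M[OF i])
    then show False using d sS by auto
  qed
  have eS: "supp (M i) S = (if S \<inter> Bf i \<noteq> {} then Bf (nxt i) else {}) \<union> (if S \<inter> Cf i \<noteq> {} then Cf (nxt i) else {})"
    using S1 by (auto simp: supp_M[OF i])
  have eT: "supp (M i) T = (if T \<inter> Bf i \<noteq> {} then Bf (nxt i) else {}) \<union> (if T \<inter> Cf i \<noteq> {} then Cf (nxt i) else {})"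
    using T1 by (auto simp: supp_M[OF i])
  have BN: "Bf (nxt i) \<noteq> {}" and CN: "Cf (nxt i) \<noteq> {}" using c by auto
  have S2: "S \<subseteq> Bf i \<or> S \<subseteq> Cf i"
  proof (rule ccontr)
    assume "\<not> ?thesis"
    then have "S \<inter> Bf i \<noteq> {}" "S \<inter> Cf i \<noteq> {}" using S1 by auto
    then have "supp (M i) S = Bf (nxt i) \<union> Cf (nxt i)" unfolding eS by simp
    moreover have "supp (M i) T \<subseteq> Bf (nxt i) \<union> Cf (nxt i)" unfolding eT by auto
    ultimately show False using d sT by blast
  qed
  have T2: "T \<subseteq> Bf i \<or> T \<subseteq> Cf i"
  proof (rule ccontr)
    assume "\<not> ?thesis"
    then have "T \<inter> Bf i \<noteq> {}" "T \<inter> Cf i \<noteq> {}" using T1 by auto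
    then have "supp (M i) T = Bf (nxt i) \<union> Cf (nxt i)" unfolding eT by simp
    moreover have "supp (M i) S \<subseteq> Bf (nxt i) \<union> Cf (nxt i)" unfolding eS by auto
    ultimately show False using d sS by blast
  qed
  have dBC: "Bf i \<inter> Cf i = {}" using c by simp
  have imB: "X \<noteq> {} \<Longrightarrow> X \<subseteq> Bf i \<Longrightarrow> supp (M i) X = Bf (nxt i)" for X
    using supp_M[OF i, of X] dBC by auto
  have imC: "X \<noteq> {} \<Longrightarrow> X \<subseteq> Cf i \<Longrightarrow> supp (M i) X = Cf (nxt i)" for X
    using supp_M[OF i, of X] dBC by auto
  from S2 T2 show ?thesis
  proof (elim disjE)
    assume "S \<subseteq> Bf i" "T \<subseteq> Bf i" then show ?thesis using imB S T d BN by auto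
  next
    assume "S \<subseteq> Bf i" "T \<subseteq> Cf i" then show ?thesis using imB imC S T by auto
  next
    assume "S \<subseteq> Cf i" "T \<subseteq> Bf i" then show ?thesis using imB imC S T by auto
  next
    assume "S \<subseteq> Cf i" "T \<subseteq> Cf i" then show ?thesis using imC S T d CN by auto
  qed
qed

lemma eq_cfg: assumes i: "i < p" and j: "j < p" and "Bf i \<subseteq> Bf j" "Cf i \<subseteq> Cf j"
  shows "i = j"
proof -
  have "Bf i \<union> Cf i \<subseteq> Bf j \<union> Cf j" using assms by auto
  moreover have "card (Bf j \<union> Cf j) = card (Bf i \<union> Cf i)" using cfg[OF i] cfg[OF j] by simp
  ultimately have u: "Bf i \<union> Cf i = Bf j \<union> Cf j" by (intro card_subset_eq) auto
  have "Bf i = Bf j" "Cf i = Cf j" using u assms cfg[OF j] by auto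
  then show ?thesis using distinct_cfg[OF i j] by simp
qed

lemma step2: assumes i: "i < p" and j: "j < p" and S: "S \<noteq> {}" and T: "T \<noteq> {}"
    and d: "supp (M j) (supp (M i) S) \<inter> supp (M j) (supp (M i) T) = {}"
  shows "j = nxt i"
proof -
  have n: "nxt i < p" using nx_lt p_pos by auto
  have d1: "supp (M i) S \<inter> supp (M i) T = {}"
    using suppL_meet[of "[M j]"] stoch_M[OF j] d by auto
  have sS: "supp (M i) S \<noteq> {}" and sT: "supp (M i) T \<noteq> {}"
    using supp_ne[OF stoch_M[OF i]] S T by auto
  from pair_M[OF i S T d1] pair_M[OF j sS sT d]
  have "(Bf (nxt i) \<subseteq> Bf j \<and> Cf (nxt i) \<subseteq> Cf j) \<or> (Bf (nxt i) \<subseteq> Cf j \<and> Cf (nxt i) \<subseteq> Bf j)"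
    by auto
  then show ?thesis
  proof
    assume "Bf (nxt i) \<subseteq> Bf j \<and> Cf (nxt i) \<subseteq> Cf j"
    then show ?thesis using eq_cfg[OF n j] by simp
  next
    assume a: "Bf (nxt i) \<subseteq> Cf j \<and> Cf (nxt i) \<subseteq> Bf j"
    have "Bf (nxt i) \<union> Cf (nxt i) \<subseteq> Bf j \<union> Cf j" using a by auto
    moreover have "card (Bf j \<union> Cf j) = card (Bf (nxt i) \<union> Cf (nxt i))" using cfg[OF n] cfg[OF j] by simp
    ultimately have u: "Bf (nxt i) \<union> Cf (nxt i) = Bf j \<union> Cf j" by (intro card_subset_eq) auto
    have "Bf (nxt i) = Cf j" "Cf (nxt i) = Bf j" using u a cfg[OF j] cfg[OF n] by auto
    then have "{Bf (nxt i), Cf (nxt i)} = {Bf j, Cf j}" by auto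
    then show ?thesis using distinct_cfg[OF n j] by simp
  qed
qed

abbreviation "ix \<equiv> ixg p Bf Cf"

lemma ix: "A \<in> M ` {..<p} \<Longrightarrow> ix A < p \<and> A = M (ix A)"
  unfolding ixg_def by (rule someI_ex) auto

lemma stoch_Sigma: "set L \<subseteq> M ` {..<p} \<Longrightarrow> \<forall>A\<in>set L. stochastic A"
  using stoch_M by auto

lemma chain:
  "set L \<subseteq> M ` {..<p} \<Longrightarrow> S \<noteq> {} \<Longrightarrow> T \<noteq> {} \<Longrightarrow> suppL L S \<inter> suppL L T = {} \<Longrightarrow>
   Suc t < length L \<Longrightarrow> ix (L ! Suc t) = nxt (ix (L ! t))"
proof (induction L arbitrary: S T t)
  case Nil then show ?case by simp
next
  case (Cons A L)
  obtain i where i: "i < p" "A = M i" "ix A = i" using ix[of A] Cons.prems(1) by auto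
  have stL: "\<forall>A\<in>set L. stochastic A" using stoch_Sigma Cons.prems(1) by auto
  have sS: "supp A S \<noteq> {}" and sT: "supp A T \<noteq> {}"
    using supp_ne[OF stoch_M[OF i(1)]] Cons.prems i by auto
  have dL: "suppL L (supp A S) \<inter> suppL L (supp A T) = {}" using Cons.prems(4) by simp
  show ?case
  proof (cases t)
    case 0
    obtain B L' where L: "L = B # L'" using Cons.prems(5) 0 by (cases L) auto
    obtain j where j: "j < p" "B = M j" "ix B = j" using ix[of B] Cons.prems(1) L by auto
    have "supp B (supp A S) \<inter> supp B (supp A T) = {}"
      using suppL_meet[of L'] stL L dL by auto
    then have "j = nxt i" using step2[OF i(1) j(1) Cons.prems(2,3)] i j by simp
    then show ?thesis using 0 L i j by simp
  next
    case (Suc t')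
    have "ix (L ! Suc t') = nxt (ix (L ! t'))"
      using Cons.IH[OF _ sS sT dL] Cons.prems Suc by auto
    then show ?thesis using Suc by simp
  qed
qed

end



context
  fixes p :: nat and Bf Cf :: "nat \<Rightarrow> 'n::finite set"
  assumes G: "goodcfg p Bf Cf"
begin

abbreviation "M' \<equiv> Mcfg p Bf Cf"

lemma supp_M_B: "i < p \<Longrightarrow> supp (M' i) (Bf i) = Bf (nx p i)"
  using supp_M[OF G, of i "Bf i"] cfg[OF G, of i] by (auto simp del: Int_Un_eq)

lemma supp_M_C: "i < p \<Longrightarrow> supp (M' i) (Cf i) = Cf (nx p i)"
  using supp_M[OF G, of i "Cf i"] cfg[OF G, of i] by (auto simp del: Int_Un_eq)

lemma suppL_run:
  "i \<le> p \<Longrightarrow> suppL (map M' [0..<i]) (Bf 0) = Bf (i mod p) \<and> suppL (map M' [0..<i]) (Cf 0) = Cf (i mod p)"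
proof (induction i)
  case 0 then show ?case by simp
next
  case (Suc i)
  then have i: "i < p" by simp
  have "suppL (map M' [0..<Suc i]) X = supp (M' i) (suppL (map M' [0..<i]) X)" for X
    by (simp add: suppL_append)
  then show ?case using Suc i supp_M_B[OF i] supp_M_C[OF i] by (simp add: nx_def)
qed

lemma bad_prod: "\<not> pow_conv_rank_one (mat_prod_list (map M' [0..<p]))"
proof -
  have p: "p > 0" using p_pos[OF G] .
  define Q where "Q = mat_prod_list (map M' [0..<p])"
  have st: "\<forall>A\<in>set (map M' [0..<p]). stochastic A" using stoch_M[OF G] by auto
  have Q: "stochastic Q" unfolding Q_def using stoch_prod_list[OF st] .
  have sB: "supp Q (Bf 0) = Bf 0" and sC: "supp Q (Cf 0) = Cf 0"
    unfolding Q_def supp_prod_list[OF st] using suppL_run[of p] by auto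
  obtain b where b: "b \<in> Bf 0" using cfg[OF G p] by auto
  obtain c where c: "c \<in> Cf 0" using cfg[OF G p] by auto
  have "\<not> pow_conv_rank_one Q"
  proof (rule not_conv[OF Q b c])
    show "Bf 0 \<inter> Cf 0 = {}" using cfg[OF G p] by blast
    show "\<And>x j. x \<in> Bf 0 \<Longrightarrow> 0 < Q $ x $ j \<Longrightarrow> j \<in> Bf 0"
      using sB by (auto simp: supp_def)
    show "\<And>x j. x \<in> Cf 0 \<Longrightarrow> 0 < Q $ x $ j \<Longrightarrow> j \<in> Cf 0"
      using sC by (auto simp: supp_def)
  qed
  then show ?thesis unfolding Q_def .
qed

lemma mod_contra: assumes "a < p" "0 < m" "m < (p::nat)" "(a + m) mod p = a" shows False
proof (cases "a + m < p")
  case True then show False using assms by simp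
next
  case False
  then have "(a + m) mod p = (a + m - p) mod p" by (simp add: le_mod_geq)
  also have "\<dots> = a + m - p" using assms by simp
  finally show False using assms by simp
qed

lemma good_prod:
  assumes ne: "1 \<le> length ms" and lt: "length ms < p" and sub: "set ms \<subseteq> M' ` {..<p}"
  shows "pow_conv_rank_one (mat_prod_list ms)"
proof -
  define m where "m = length ms"
  define L where "L = ms @ ms"
  have stms: "\<forall>A\<in>set ms. stochastic A" using stoch_Sigma[OF G sub] .
  have stL: "\<forall>A\<in>set L. stochastic A" using stms by (auto simp: L_def)
  have subL: "set L \<subseteq> M' ` {..<p}" using sub by (auto simp: L_def)
  have Q: "stochastic (mat_prod_list ms)" using stoch_prod_list[OF stms] .
  have meet: "suppL L {x} \<inter> suppL L {y} \<noteq> {}" for x y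
  proof (cases "x = y")
    case True then show ?thesis using suppL_ne[OF stL, of "{x}"] by simp
  next
    case False
    show ?thesis
    proof
      assume d: "suppL L {x} \<inter> suppL L {y} = {}"
      have ch: "Suc t < length L \<Longrightarrow> ixg p Bf Cf (L ! Suc t) = nx p (ixg p Bf Cf (L ! t))" for t
        using chain[OF G subL _ _ d] by auto
      define a0 where "a0 = ixg p Bf Cf (L ! 0)"
      have "0 < length L" using ne by (auto simp: L_def)
      then have "L ! 0 \<in> set L" by (rule nth_mem)
      then have L0: "L ! 0 \<in> M' ` {..<p}" using subL by blast
      have a0: "a0 < p" using ix[OF G L0] by (simp add: a0_def)
      have run: "t \<le> m \<Longrightarrow> ixg p Bf Cf (L ! t) = (a0 + t) mod p" for t
      proof (induction t)
        case 0 then show ?case using a0 by (simp add: a0_def)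
      next
        case (Suc t)
        have "Suc t < length L" using Suc.prems ne by (simp add: L_def m_def)
        then have "ixg p Bf Cf (L ! Suc t) = nx p ((a0 + t) mod p)" using ch Suc by simp
        then show ?case by (simp add: nx_def mod_Suc_eq)
      qed
      have "L ! m = L ! 0" using ne by (simp add: L_def m_def nth_append)
      then have "(a0 + m) mod p = a0" using run[of m] run[of 0] a0 by simp
      moreover have "0 < m" "m < p" using ne lt by (auto simp: m_def)
      ultimately show False using mod_contra[OF a0] by blast
    qed
  qed
  show ?thesis
  proof (rule conv_of_scrambling[OF Q, of 2])
    fix x y
    obtain j where "j \<in> suppL L {x}" "j \<in> suppL L {y}" using meet[of x y] by blast
    then have "j \<in> supp (mat_pow (mat_prod_list ms) 2) {x}" "j \<in> supp (mat_pow (mat_prod_list ms) 2) {y}"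
      unfolding mat_pow_two supp_prod_list[OF stL[unfolded L_def]] by (auto simp: L_def)
    then show "\<exists>j. 0 < mat_pow (mat_prod_list ms) 2 $ x $ j \<and> 0 < mat_pow (mat_prod_list ms) 2 $ y $ j"
      by (auto simp: supp_def)
  qed simp
qed

end



definition Gset :: "nat \<Rightarrow> ('n::finite set \<times> 'n set) set" where
  "Gset d = {(B,C). B \<inter> C = {} \<and> B \<noteq> {} \<and> C \<noteq> {} \<and> card (B \<union> C) = d}"

lemma card_Gset:
  assumes d: "d \<ge> 1"
  shows "card (Gset d :: ('n::finite set \<times> 'n set) set) = (CARD('n) choose d) * (2 ^ d - 2)"
proof -
  define f :: "'n set \<times> 'n set \<Rightarrow> 'n set \<times> 'n set" where "f = (\<lambda>(B,C). (B \<union> C, B))"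
  define S where "S = Sigma {D :: 'n set. card D = d} (\<lambda>D. Pow D - {{}, D})"
  have inj: "inj_on f (Gset d)"
  proof (rule inj_onI)
    fix x y assume x: "x \<in> Gset d" and y: "y \<in> Gset d" and e: "f x = f y"
    obtain B C where xe: "x = (B,C)" by (cases x)
    obtain B' C' where ye: "y = (B',C')" by (cases y)
    have "B \<union> C = B' \<union> C'" "B = B'" using e by (auto simp: f_def xe ye)
    moreover have "B \<inter> C = {}" "B' \<inter> C' = {}" using x y by (auto simp: Gset_def xe ye)
    ultimately have "C = C'" by blast
    then show "x = y" using \<open>B = B'\<close> by (simp add: xe ye)
  qed
  have img: "f ` Gset d = S"
  proof
    show "f ` Gset d \<subseteq> S"
    proof
      fix z assume "z \<in> f ` Gset d"
      then obtain B C where bc: "(B,C) \<in> Gset d" "z = (B \<union> C, B)" by (auto simp: f_def)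
      then show "z \<in> S" by (auto simp: S_def Gset_def)
    qed
    show "S \<subseteq> f ` Gset d"
    proof
      fix z assume "z \<in> S"
      then obtain D B where z: "z = (D, B)" "card D = d" "B \<subseteq> D" "B \<noteq> {}" "B \<noteq> D"
        by (auto simp: S_def)
      have "(B, D - B) \<in> Gset d" using z by (auto simp: Gset_def Un_absorb1)
      moreover have "f (B, D - B) = z" using z by (auto simp: f_def)
      ultimately show "z \<in> f ` Gset d" by (metis image_eqI)
    qed
  qed
  have cD: "card (Pow D - {{}, D}) = 2 ^ d - 2" if "card D = d" for D :: "'n set"
  proof -
    have "D \<noteq> {}" using that d by auto
    then have "card {{}, D} = 2" by simp
    moreover have "{{}, D} \<subseteq> Pow D" by auto
    ultimately show ?thesis using that by (simp add: card_Diff_subset card_Pow)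
  qed
  have "card S = (\<Sum>D\<in>{D :: 'n set. card D = d}. card (Pow D - {{}, D}))"
    unfolding S_def by (rule card_SigmaI) auto
  also have "\<dots> = (\<Sum>D\<in>{D :: 'n set. card D = d}. 2 ^ d - 2)"
    using cD by (intro sum.cong) auto
  also have "\<dots> = card {D :: 'n set. card D = d} * (2 ^ d - 2)" by simp
  also have "card {D :: 'n set. card D = d} = CARD('n) choose d"
    using n_subsets[of "UNIV :: 'n set" d] by simp
  finally have "card S = (CARD('n) choose d) * (2 ^ d - 2)" .
  moreover have "card (Gset d :: ('n set \<times> 'n set) set) = card S" using card_image[OF inj] img by simp
  ultimately show ?thesis by simp
qed

lemma card_Gset_F:
  "card (Gset d :: ('n::finite set \<times> 'n set) set) = 2 * card ((\<lambda>(B,C). {B,C}) ` (Gset d :: ('n set \<times> 'n set) set))"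
proof -
  define G where "G = (Gset d :: ('n set \<times> 'n set) set)"
  define F where "F = (\<lambda>(B,C). {B,C}) ` G"
  define fib where "fib f = {bc \<in> G. {fst bc, snd bc} = f}" for f
  have U: "G = (\<Union>f\<in>F. fib f)" by (auto simp: F_def fib_def)
  have c2: "card (fib f) = 2" if fF: "f \<in> F" for f
  proof -
    obtain bc where bc0: "bc \<in> G" "f = (\<lambda>(B,C). {B,C}) bc" using fF unfolding F_def by blast
    obtain B C where "bc = (B,C)" by (cases bc)
    then have bc: "(B,C) \<in> G" "f = {B,C}" using bc0 by auto
    have ne: "B \<noteq> C" using bc by (auto simp: G_def Gset_def)
    have cb: "(C,B) \<in> G" using bc by (auto simp: G_def Gset_def Un_commute Int_commute)
    have "fib f = {(B,C), (C,B)}"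
      using bc cb by (auto simp: fib_def doubleton_eq_iff)
    then show ?thesis using ne by simp
  qed
  have "card G = (\<Sum>f\<in>F. card (fib f))"
    unfolding U by (rule card_UN_disjoint) (auto simp: fib_def)
  also have "\<dots> = (\<Sum>f\<in>F. 2)" using c2 by (intro sum.cong) auto
  finally show ?thesis by (simp add: G_def F_def)
qed

lemma exists_cfg:
  fixes n :: nat
  assumes n: "n = CARD('n::finite)" "n \<ge> 2"
  defines "k \<equiv> n div 3"
  shows "\<exists>Bf Cf :: nat \<Rightarrow> 'n set. goodcfg ((n choose k) * (2 ^ (n - k - 1) - 1)) Bf Cf"
proof -
  define d where "d = n - k"
  define p where "p = (n choose k) * (2 ^ (n - k - 1) - 1)"
  have d2: "d \<ge> 2" using n by (simp add: d_def k_def)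
  have kn: "k \<le> n" by (simp add: k_def)
  define G where "G = (Gset d :: ('n set \<times> 'n set) set)"
  define F where "F = (\<lambda>(B,C). {B,C}) ` G"
  have "card G = (n choose d) * (2 ^ d - 2)" using card_Gset[of d] d2 n by (simp add: G_def)
  also have "n choose d = n choose k" using binomial_symmetric[OF kn] by (simp add: d_def)
  also have "(2::nat) ^ d - 2 = 2 * (2 ^ (d - 1) - 1)"
  proof -
    have "(2::nat) ^ d = 2 * 2 ^ (d - 1)" using d2 by (metis Suc_diff_1 less_le_trans pos2 power_Suc zero_less_numeral)
    then show ?thesis by simp
  qed
  finally have "card G = 2 * p" by (simp add: p_def d_def)
  moreover have "card G = 2 * card F" unfolding G_def F_def by (rule card_Gset_F)
  ultimately have cF: "card F = p" by simp
  obtain e where e: "bij_betw e {0..<card F} F" using ex_bij_betw_nat_finite[of F] by auto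
  define pick where "pick i = (SOME bc. bc \<in> G \<and> {fst bc, snd bc} = e i)" for i
  define Bf where "Bf i = fst (pick i)" for i
  define Cf where "Cf i = snd (pick i)" for i
  have pk: "(Bf i, Cf i) \<in> G \<and> {Bf i, Cf i} = e i" if "i < p" for i
  proof -
    have "e i \<in> F" using e that cF by (auto simp: bij_betw_def)
    then have "\<exists>bc. bc \<in> G \<and> {fst bc, snd bc} = e i" by (auto simp: F_def)
    then have "pick i \<in> G \<and> {fst (pick i), snd (pick i)} = e i"
      unfolding pick_def by (rule someI_ex)
    then show ?thesis by (simp add: Bf_def Cf_def)
  qed
  have pp: "p > 0"
  proof -
    have "n choose k > 0" using kn by simp
    moreover have "(2::nat) ^ (n - k - 1) \<ge> 2"
    proof -
      have "n - k - 1 \<ge> 1" using d2 by (simp add: d_def)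
      then have "(2::nat) ^ 1 \<le> 2 ^ (n - k - 1)" by (rule power_increasing) simp
      then show ?thesis by simp
    qed
    ultimately show ?thesis by (simp add: p_def)
  qed
  have "goodcfg p Bf Cf"
    unfolding goodcfg_def
  proof (intro conjI allI impI)
    show "0 < p" by (rule pp)
  next
    fix i assume i: "i < p"
    note a = pk[OF i] pk[OF pp]
    show "Bf i \<inter> Cf i = {}" using a by (simp add: G_def Gset_def)
    show "Bf i \<noteq> {}" using a by (simp add: G_def Gset_def)
    show "Cf i \<noteq> {}" using a by (simp add: G_def Gset_def)
    show "card (Bf i \<union> Cf i) = card (Bf 0 \<union> Cf 0)" using a by (simp add: G_def Gset_def)
  next
    fix i j assume i: "i < p" and j: "j < p" and eq: "{Bf i, Cf i} = {Bf j, Cf j}"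
    then have "e i = e j" using pk[OF i] pk[OF j] by simp
    then show "i = j" using e i j cF by (auto simp: bij_betw_def inj_on_def)
  qed
  then show ?thesis unfolding p_def by blast
qed



theorem theorem5:
  fixes n :: nat and pstar :: nat
  assumes "n = CARD('n::finite)" and "n \<ge> 2"
    and "pstar = (n choose (n div 3)) * (2 ^ (n - n div 3 - 1) - 1)"
  shows "\<exists>\<Sigma> :: (real^'n^'n) set.
           (\<forall>A\<in>\<Sigma>. stochastic A) \<and>
           (\<exists>ms. length ms = pstar \<and> set ms \<subseteq> \<Sigma> \<and> \<not> pow_conv_rank_one (mat_prod_list ms)) \<and>
           (\<forall>ms. 1 \<le> length ms \<and> length ms \<le> pstar - 1 \<and> set ms \<subseteq> \<Sigma> \<longrightarrow>
                 pow_conv_rank_one (mat_prod_list ms))"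
proof -
  obtain Bf Cf :: "nat \<Rightarrow> 'n set" where G: "goodcfg pstar Bf Cf"
    using exists_cfg[OF assms(1,2)] assms(3) by auto
  have pp: "pstar > 0" using p_pos[OF G] .
  define \<Sigma> where "\<Sigma> = Mcfg pstar Bf Cf ` {..<pstar}"
  have s1: "\<forall>A\<in>\<Sigma>. stochastic A" using stoch_M[OF G] by (auto simp: \<Sigma>_def)
  have s2: "\<exists>ms. length ms = pstar \<and> set ms \<subseteq> \<Sigma> \<and> \<not> pow_conv_rank_one (mat_prod_list ms)"
    using bad_prod[OF G] by (intro exI[of _ "map (Mcfg pstar Bf Cf) [0..<pstar]"]) (auto simp: \<Sigma>_def)
  have s3: "\<forall>ms. 1 \<le> length ms \<and> length ms \<le> pstar - 1 \<and> set ms \<subseteq> \<Sigma> \<longrightarrow>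
                 pow_conv_rank_one (mat_prod_list ms)"
  proof (intro allI impI)
    fix ms :: "(real^'n^'n) list"
    assume a: "1 \<le> length ms \<and> length ms \<le> pstar - 1 \<and> set ms \<subseteq> \<Sigma>"
    then have "length ms < pstar" using pp by linarith
    then show "pow_conv_rank_one (mat_prod_list ms)"
      using good_prod[OF G] a by (auto simp: \<Sigma>_def)
  qed
  show ?thesis using s1 s2 s3 by blast
qed

end
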